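(* Let $\triangle ABC$ be a nondegenerate triangle circumscribed about a central conic such that either the center of the conic or one of its foci coincides with the circumcenter of $\triangle ABC$. Then $\triangle ABC$ has no right angle.
   Context: A central conic is a non-degenerate ellipse or hyperbola. A triangle is circumscribed about a conic if each of its three sidelines is tangent to the conic. *)

theory Defs
  imports "HOL-Analysis.Analysis"
begin

text \<open>A central conic in the Euclidean plane is given by a centre c, an orthonormal frame
  (e1, e2), semi-axes a, b > 0 and a sign s: s = 1 gives the ellipse
  (u/a)^2 + (v/b)^2 = 1 (normalised so that a \<ge> b, i.e. e1 is the major axis),
  s = -1 gives the hyperbola (u/a)^2 - (v/b)^2 = 1, where u = (p-c).e1, v = (p-c).e2.\<close>

definition central_conic ::
  "real^2 \<Rightarrow> real^2 \<Rightarrow> real^2 \<Rightarrow> real \<Rightarrow> real \<Rightarrow> real \<Rightarrow> bool" where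
  "central_conic c e1 e2 a b s \<longleftrightarrow>
     norm e1 = 1 \<and> norm e2 = 1 \<and> e1 \<bullet> e2 = 0 \<and> a > 0 \<and> b > 0 \<and>
     ((s = 1 \<and> b \<le> a) \<or> s = -1)"

definition conic_fun ::
  "real^2 \<Rightarrow> real^2 \<Rightarrow> real^2 \<Rightarrow> real \<Rightarrow> real \<Rightarrow> real \<Rightarrow> real^2 \<Rightarrow> real" where
  "conic_fun c e1 e2 a b s p = (((p - c) \<bullet> e1) / a)^2 + s * (((p - c) \<bullet> e2) / b)^2 - 1"

definition conic_set ::
  "real^2 \<Rightarrow> real^2 \<Rightarrow> real^2 \<Rightarrow> real \<Rightarrow> real \<Rightarrow> real \<Rightarrow> (real^2) set" where
  "conic_set c e1 e2 a b s = {p. conic_fun c e1 e2 a b s p = 0}"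

definition conic_foci ::
  "real^2 \<Rightarrow> real^2 \<Rightarrow> real^2 \<Rightarrow> real \<Rightarrow> real \<Rightarrow> real \<Rightarrow> (real^2) set" where
  "conic_foci c e1 e2 a b s =
     {c + sqrt (a^2 - s * b^2) *\<^sub>R e1, c - sqrt (a^2 - s * b^2) *\<^sub>R e1}"

text \<open>The line through P and Q (P \<noteq> Q) is tangent to the conic if it meets the conic at a
  point p where the line's direction Q - P is orthogonal to the gradient of the defining
  function, i.e. the line is the tangent line of the conic at p.\<close>

definition tangent_line ::
  "real^2 \<Rightarrow> real^2 \<Rightarrow> real^2 \<Rightarrow> real \<Rightarrow> real \<Rightarrow> real \<Rightarrow> real^2 \<Rightarrow> real^2 \<Rightarrow> bool" where
  "tangent_line c e1 e2 a b s P Q \<longleftrightarrow> P \<noteq> Q \<and>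
     (\<exists>t::real. let p = P + t *\<^sub>R (Q - P) in
        p \<in> conic_set c e1 e2 a b s \<and>
        ((p - c) \<bullet> e1) / a^2 * (e1 \<bullet> (Q - P)) + s * ((p - c) \<bullet> e2) / b^2 * (e2 \<bullet> (Q - P)) = 0)"

definition is_circumcenter :: "real^2 \<Rightarrow> real^2 \<Rightarrow> real^2 \<Rightarrow> real^2 \<Rightarrow> bool" where
  "is_circumcenter O' A B C \<longleftrightarrow> dist O' A = dist O' B \<and> dist O' B = dist O' C"

definition right_angle_at :: "real^2 \<Rightarrow> real^2 \<Rightarrow> real^2 \<Rightarrow> bool" where
  "right_angle_at A B C \<longleftrightarrow> (B - A) \<bullet> (C - A) = 0"

end

theory Submission
  imports Defs
begin


lemma orth2_zero:
  fixes q u v :: "real^2"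
  assumes "q \<bullet> u = 0" "q \<bullet> v = 0" "u \<bullet> v = 0" "u \<noteq> 0" "v \<noteq> 0"
  shows "q = 0"
proof (rule ccontr)
  assume qn: "q \<noteq> 0"
  have h1: "q$1 * u$1 + q$2 * u$2 = 0" using assms(1) by (simp add: inner_vec_def sum_2)
  have h2: "q$1 * v$1 + q$2 * v$2 = 0" using assms(2) by (simp add: inner_vec_def sum_2)
  have h3: "u$1 * v$1 + u$2 * v$2 = 0" using assms(3) by (simp add: inner_vec_def sum_2)
  define D where "D = u$1 * v$2 - u$2 * v$1"
  have a1: "u$1 * q$1 = - (u$2 * q$2)" using h1 by (simp add: algebra_simps eq_neg_iff_add_eq_0)
  have a2: "v$1 * q$1 = - (v$2 * q$2)" using h2 by (simp add: algebra_simps eq_neg_iff_add_eq_0)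
  have "D * q$1 = v$2 * (u$1 * q$1) - u$2 * (v$1 * q$1)" unfolding D_def by (simp add: algebra_simps)
  also have "\<dots> = 0" unfolding a1 a2 by (simp add: algebra_simps)
  finally have b1: "D * q$1 = 0" .
  have "D * q$2 = u$1 * (v$2 * q$2) - v$1 * (u$2 * q$2)" unfolding D_def by (simp add: algebra_simps)
  also have "\<dots> = 0"
  proof -
    have c1: "v$2 * q$2 = - (v$1 * q$1)" using a2 by simp
    have c2: "u$2 * q$2 = - (u$1 * q$1)" using a1 by simp
    show ?thesis unfolding c1 c2 by (simp add: algebra_simps)
  qed
  finally have b2: "D * q$2 = 0" .
  have "q$1 \<noteq> 0 \<or> q$2 \<noteq> 0" using qn by (simp add: vec_eq_iff forall_2)
  with b1 b2 have D0: "D = 0" by auto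
  have "(u$1^2 + u$2^2) * (v$1^2 + v$2^2) = (u$1 * v$1 + u$2 * v$2)^2 + D^2"
    unfolding D_def by (simp add: power2_eq_square algebra_simps)
  hence "(u$1^2 + u$2^2) * (v$1^2 + v$2^2) = 0" using D0 h3 by simp
  moreover have "u$1^2 + u$2^2 > 0" using assms(4)
    by (simp add: vec_eq_iff forall_2 sum_power2_gt_zero_iff)
  moreover have "v$1^2 + v$2^2 > 0" using assms(5)
    by (simp add: vec_eq_iff forall_2 sum_power2_gt_zero_iff)
  ultimately show False by (metis mult_pos_pos less_irrefl)
qed

lemma circ:
  fixes X Y Z O' :: "real^2"
  assumes ra: "(Y - X) \<bullet> (Z - X) = 0" and "X \<noteq> Y" "X \<noteq> Z"
    and d1: "dist O' X = dist O' Y" and d2: "dist O' Y = dist O' Z"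
  shows "O' = Y + (1/2) *\<^sub>R (Z - Y)"
proof -
  define u where "u = Y - X"
  define v where "v = Z - X"
  define p where "p = O' - X"
  have un: "u \<noteq> 0" "v \<noteq> 0" using assms(2,3) unfolding u_def v_def by auto
  have "norm p = norm (p - u)" using d1 unfolding p_def u_def dist_norm
    by (simp add: norm_minus_commute)
  hence "p \<bullet> p = (p - u) \<bullet> (p - u)" by (simp add: dot_square_norm)
  hence pu: "2 * (p \<bullet> u) = u \<bullet> u" by (simp add: inner_simps inner_commute)
  have "norm p = norm (p - v)" using d1 d2 unfolding p_def v_def dist_norm
    by (simp add: norm_minus_commute)
  hence "p \<bullet> p = (p - v) \<bullet> (p - v)" by (simp add: dot_square_norm)
  hence pv: "2 * (p \<bullet> v) = v \<bullet> v" by (simp add: inner_simps inner_commute)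
  have uv: "u \<bullet> v = 0" using ra unfolding u_def v_def .
  define q where "q = p - (1/2) *\<^sub>R (u + v)"
  have "q \<bullet> u = 0" unfolding q_def using pu uv by (simp add: inner_simps inner_commute)
  moreover have "q \<bullet> v = 0" unfolding q_def using pv uv by (simp add: inner_simps inner_commute)
  ultimately have "q = 0" using orth2_zero uv un by blast
  hence "p = (1/2) *\<^sub>R (u + v)" unfolding q_def by simp
  hence "O' = X + (1/2) *\<^sub>R ((Y - X) + (Z - X))" unfolding p_def u_def v_def
    by (metis add.commute diff_add_cancel)
  show ?thesis unfolding vec_eq_iff
  proof
    fix i
    have "O'$i = X$i + (1/2) * ((Y$i - X$i) + (Z$i - X$i))"
      using \<open>O' = X + (1/2) *\<^sub>R ((Y - X) + (Z - X))\<close> by simp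
    thus "O'$i = (Y + (1/2) *\<^sub>R (Z - Y))$i" by (simp add: field_simps)
  qed
qed

lemma key:
  assumes cc: "central_conic c e1 e2 a b s"
    and tl: "tangent_line c e1 e2 a b s P Q"
    and M: "O' = P + (1/2) *\<^sub>R (Q - P)"
    and O: "O' = c \<or> O' \<in> conic_foci c e1 e2 a b s"
  shows False
proof -
  have a: "a > 0" and b: "b > 0" and n1: "norm e1 = 1" and o12: "e1 \<bullet> e2 = 0"
    and sc: "(s = 1 \<and> b \<le> a) \<or> s = -1"
    using cc unfolding central_conic_def by auto
  have e11: "e1 \<bullet> e1 = 1" using n1 by (simp add: norm_eq_sqrt_inner)
  obtain t where p: "(((P + t *\<^sub>R (Q - P) - c) \<bullet> e1) / a)^2 + s * (((P + t *\<^sub>R (Q - P) - c) \<bullet> e2) / b)^2 - 1 = 0"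
    and g: "((P + t *\<^sub>R (Q - P) - c) \<bullet> e1) / a^2 * (e1 \<bullet> (Q - P)) + s * ((P + t *\<^sub>R (Q - P) - c) \<bullet> e2) / b^2 * (e2 \<bullet> (Q - P)) = 0"
    using tl unfolding tangent_line_def conic_set_def conic_fun_def Let_def by auto
  define u0 where "u0 = (P + t *\<^sub>R (Q - P) - c) \<bullet> e1"
  define v0 where "v0 = (P + t *\<^sub>R (Q - P) - c) \<bullet> e2"
  define d1 where "d1 = e1 \<bullet> (Q - P)"
  define d2 where "d2 = e2 \<bullet> (Q - P)"
  define k where "k = 1/2 - t"
  have "O' - c = (P + t *\<^sub>R (Q - P) - c) + k *\<^sub>R (Q - P)"
    unfolding M k_def by (simp add: algebra_simps)
  hence mu: "(O' - c) \<bullet> e1 = u0 + k * d1" and mv: "(O' - c) \<bullet> e2 = v0 + k * d2"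
    unfolding u0_def v0_def d1_def d2_def by (simp_all add: inner_simps inner_commute)
  have p': "(u0/a)^2 + s * (v0/b)^2 - 1 = 0" using p unfolding u0_def v0_def .
  have g': "u0 / a^2 * d1 + s * v0 / b^2 * d2 = 0" using g unfolding u0_def v0_def d1_def d2_def .
  have L: "u0 * ((O' - c) \<bullet> e1) / a^2 + s * v0 * ((O' - c) \<bullet> e2) / b^2 = 1"
  proof -
    have "u0 * ((O' - c) \<bullet> e1) / a^2 + s * v0 * ((O' - c) \<bullet> e2) / b^2
        = ((u0/a)^2 + s * (v0/b)^2) + k * (u0 / a^2 * d1 + s * v0 / b^2 * d2)"
      unfolding mu mv by (simp add: field_simps power2_eq_square add_divide_distrib)
    also have "\<dots> = 1" using p' g' by simp
    finally show ?thesis .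
  qed
  from O show False
  proof
    assume "O' = c"
    with L show False by simp
  next
    assume "O' \<in> conic_foci c e1 e2 a b s"
    then obtain f where f: "f = sqrt (a^2 - s * b^2) \<or> f = - sqrt (a^2 - s * b^2)"
      and Of: "O' - c = f *\<^sub>R e1"
    proof -
      have "O' = c + sqrt (a^2 - s * b^2) *\<^sub>R e1 \<or> O' = c - sqrt (a^2 - s * b^2) *\<^sub>R e1"
        using \<open>O' \<in> conic_foci c e1 e2 a b s\<close> unfolding conic_foci_def by simp
      thus ?thesis
      proof
        assume "O' = c + sqrt (a^2 - s * b^2) *\<^sub>R e1"
        thus ?thesis using that[of "sqrt (a^2 - s * b^2)"] by simp
      next
        assume "O' = c - sqrt (a^2 - s * b^2) *\<^sub>R e1"
        thus ?thesis using that[of "- sqrt (a^2 - s * b^2)"] by simp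
      qed
    qed
    have f2: "f^2 = a^2 - s * b^2"
    proof -
      have "a^2 - s * b^2 \<ge> 0" using sc
      proof
        assume "s = 1 \<and> b \<le> a"
        hence "b^2 \<le> a^2" using b by (intro power_mono) auto
        thus ?thesis using \<open>s = 1 \<and> b \<le> a\<close> by simp
      next
        assume "s = -1" thus ?thesis by simp
      qed
      thus ?thesis using f by auto
    qed
    have "(O' - c) \<bullet> e1 = f" "(O' - c) \<bullet> e2 = 0" using Of e11 o12 by auto
    with L have fu: "u0 * f = a^2" using a by (simp add: field_simps)
    have "u0^2 * f^2 = (u0 * f)^2" by (simp add: power_mult_distrib)
    also have "\<dots> = a^4" using fu by simp
    finally have "u0^2 * f^2 = a^4" .
    hence E: "u0^2 * (a^2 - s * b^2) = a^4" using f2 by simp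
    have p2: "b^2 * u0^2 + s * a^2 * v0^2 = a^2 * b^2" using p' a b
      by (simp add: field_simps power2_eq_square)
    from sc show False
    proof
      assume s1: "s = 1 \<and> b \<le> a"
      have "a^2 * v0^2 \<ge> 0" by simp
      moreover have "b^2 * u0^2 = a^2 * b^2 - a^2 * v0^2" using p2 s1 by simp
      ultimately have "b^2 * u0^2 \<le> b^2 * a^2" by (simp add: mult.commute)
      hence "u0^2 \<le> a^2" using b by simp
      hence "u0^2 * (a^2 - b^2) \<le> a^2 * (a^2 - b^2)" using s1 b
        by (simp add: mult_right_mono power_mono)
      hence "a^4 \<le> a^2 * a^2 - a^2 * b^2" using E s1 by (simp add: algebra_simps)
      moreover have "a^2 * b^2 > 0" using a b by simp
      ultimately show False by (simp add: power4_eq_xxxx power2_eq_square)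
    next
      assume s1: "s = -1"
      hence "b^2 * u0^2 \<ge> b^2 * a^2" using p2 by (simp add: algebra_simps)
      hence "u0^2 \<ge> a^2" using b by simp
      hence "u0^2 * (a^2 + b^2) \<ge> a^2 * (a^2 + b^2)"
        by (simp add: mult_right_mono)
      hence "a^4 \<ge> a^2 * a^2 + a^2 * b^2" using E s1 by (simp add: algebra_simps)
      moreover have "a^2 * b^2 > 0" using a b by simp
      ultimately show False by (simp add: power4_eq_xxxx power2_eq_square)
    qed
  qed
qed

theorem proposition2p2:
  fixes A B C c e1 e2 :: "real^2" and a b s :: real and O' :: "real^2"
  assumes "\<not> collinear {A, B, C}"
    and "central_conic c e1 e2 a b s"
    and "tangent_line c e1 e2 a b s A B"
    and "tangent_line c e1 e2 a b s B C"
    and "tangent_line c e1 e2 a b s C A"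
    and "is_circumcenter O' A B C"
    and "O' = c \<or> O' \<in> conic_foci c e1 e2 a b s"
  shows "\<not> right_angle_at A B C \<and> \<not> right_angle_at B C A \<and> \<not> right_angle_at C A B"
proof -
  have ne: "A \<noteq> B" "B \<noteq> C" "C \<noteq> A"
  proof -
    show "A \<noteq> B" using assms(1) collinear_2[of B C] by auto
    show "B \<noteq> C" using assms(1) collinear_2[of A C] by auto
    show "C \<noteq> A" using assms(1) collinear_2[of A B] by (auto simp: insert_commute)
  qed
  have d: "dist O' A = dist O' B" "dist O' B = dist O' C" using assms(6) unfolding is_circumcenter_def by auto
  have 1: "\<not> right_angle_at A B C"
  proof
    assume "right_angle_at A B C"
    hence r: "(B - A) \<bullet> (C - A) = 0" unfolding right_angle_at_def .
    have "O' = B + (1/2) *\<^sub>R (C - B)" by (rule circ[OF r ne(1) ne(3)[symmetric] d(1) d(2)])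
    then show False using key[OF assms(2) assms(4) _ assms(7)] by blast
  qed
  have 2: "\<not> right_angle_at B C A"
  proof
    assume "right_angle_at B C A"
    hence r: "(C - B) \<bullet> (A - B) = 0" unfolding right_angle_at_def .
    have "O' = C + (1/2) *\<^sub>R (A - C)" by (rule circ[OF r ne(2) ne(1)[symmetric] d(2) trans[OF d(2)[symmetric] d(1)[symmetric]]])
    then show False using key[OF assms(2) assms(5) _ assms(7)] by blast
  qed
  have 3: "\<not> right_angle_at C A B"
  proof
    assume "right_angle_at C A B"
    hence r: "(A - C) \<bullet> (B - C) = 0" unfolding right_angle_at_def .
    have "O' = A + (1/2) *\<^sub>R (B - A)" by (rule circ[OF r ne(3) ne(2)[symmetric] trans[OF d(2)[symmetric] d(1)[symmetric]] d(1)])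
    then show False using key[OF assms(2) assms(3) _ assms(7)] by blast
  qed
  show ?thesis using 1 2 3 by blast
qed

end
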